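(* Let $X$ be a topological space and let $K_n\subseteq\mathbb R^X$ for $n\in\mathbb N$. Let $\Gamma=\bigcup_{n\in\mathbb N}K_n$ and suppose that for each $n\in\mathbb N$ the set $A_n$ of points $x\in X$ at which $K_n$ is equicontinuous is a residual subset of $X$. Then $X$ is conditionally $\sigma^*_{C(X_\Gamma)}$-$\alpha$-favorable. In particular, $X$ is conditionally $\sigma^*_\Gamma$-$\alpha$-favorable.
   Context: A family $K\subseteq\mathbb R^X$ is equicontinuous at $x\in X$ if for every $\varepsilon>0$ there is a neighborhood $U$ of $x$ such that $|g(y)-g(x)|<\varepsilon$ for all $y\in U$ and all $g\in K$. A set is residual if its complement is of first category. $X_\Gamma$ denotes the set $X$ equipped with the topology generated by the functions in $\Gamma$ (the weakest topology making each $g\in\Gamma$ continuous), and $C(X_\Gamma)$ is the set of real-valued continuous functions on $X_\Gamma$, viewed as a subset of $\mathbb R^X$. For $\Lambda\subseteq\mathbb R^X$, the game $\mathcal J^*_\Lambda$ on $X$: players $\beta$ and $\alpha$ alternately choose nonempty open subsets of $X$, $V_0\supseteq U_0\supseteq V_1\supseteq U_1\supseteq\cdots$, with $\beta$ choosing the $V_n$ (starting with $V_0$) and $\alpha$ the $U_n$. Player $\alpha$ wins the play $((V_n,U_n))_n$ iff for every sequence $(a_n)$ with $a_n\in U_n$ for all $n$ and every $g\in\Lambda$ there exists $t\in\bigcap_n U_n$ with $g(t)\in\overline{\{g(a_n):n\in\mathbb N\}}$. $X$ is conditionally $\sigma^*_\Lambda$-$\alpha$-favorable if $\alpha$ has a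 strategy $\tau$ such that every play compatible with $\tau$ satisfying $\bigcap_n U_n\neq\emptyset$ is won by $\alpha$. *)

theory Defs
  imports "HOL-Analysis.Analysis"
begin

definition equicontinuous_at :: "'a topology \<Rightarrow> ('a \<Rightarrow> real) set \<Rightarrow> 'a \<Rightarrow> bool" where
  "equicontinuous_at X K x \<longleftrightarrow>
     (\<forall>\<epsilon>>0. \<exists>U. openin X U \<and> x \<in> U \<and> (\<forall>y\<in>U. \<forall>g\<in>K. \<bar>g y - g x\<bar> < \<epsilon>))"

definition nowhere_dense_in :: "'a topology \<Rightarrow> 'a set \<Rightarrow> bool" where
  "nowhere_dense_in X S \<longleftrightarrow> S \<subseteq> topspace X \<and> X interior_of (X closure_of S) = {}"

definition first_category_in :: "'a topology \<Rightarrow> 'a set \<Rightarrow> bool" where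
  "first_category_in X S \<longleftrightarrow>
     (\<exists>N :: nat \<Rightarrow> 'a set. (\<forall>n. nowhere_dense_in X (N n)) \<and> S \<subseteq> (\<Union>n. N n))"

definition residual_in :: "'a topology \<Rightarrow> 'a set \<Rightarrow> bool" where
  "residual_in X A \<longleftrightarrow> A \<subseteq> topspace X \<and> first_category_in X (topspace X - A)"

definition weak_topology :: "'a topology \<Rightarrow> ('a \<Rightarrow> real) set \<Rightarrow> 'a topology" where
  "weak_topology X \<Gamma> = topology_generated_by
     (insert (topspace X) {topspace X \<inter> g -` U | g U. g \<in> \<Gamma> \<and> open U})"

definition Cfun :: "'a topology \<Rightarrow> ('a \<Rightarrow> real) set" where
  "Cfun T = {f. continuous_map T euclideanreal f}"

text \<open>History of a play before alpha's n-th move: V0, U0, ..., V(n-1), U(n-1), Vn.\<close>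
definition history :: "(nat \<Rightarrow> 'a set) \<Rightarrow> (nat \<Rightarrow> 'a set) \<Rightarrow> nat \<Rightarrow> 'a set list" where
  "history V U n = concat (map (\<lambda>i. [V i, U i]) [0..<n]) @ [V n]"

definition partial_legal :: "'a topology \<Rightarrow> (nat \<Rightarrow> 'a set) \<Rightarrow> (nat \<Rightarrow> 'a set) \<Rightarrow> nat \<Rightarrow> bool" where
  "partial_legal X V U n \<longleftrightarrow>
     (\<forall>i<n. openin X (V i) \<and> V i \<noteq> {} \<and> openin X (U i) \<and> U i \<noteq> {} \<and> U i \<subseteq> V i
            \<and> V (Suc i) \<subseteq> U i) \<and> openin X (V n) \<and> V n \<noteq> {}"

definition legal_play :: "'a topology \<Rightarrow> (nat \<Rightarrow> 'a set) \<Rightarrow> (nat \<Rightarrow> 'a set) \<Rightarrow> bool" where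
  "legal_play X V U \<longleftrightarrow>
     (\<forall>n. openin X (V n) \<and> V n \<noteq> {} \<and> openin X (U n) \<and> U n \<noteq> {} \<and> U n \<subseteq> V n
          \<and> V (Suc n) \<subseteq> U n)"

definition alpha_strategy :: "'a topology \<Rightarrow> ('a set list \<Rightarrow> 'a set) \<Rightarrow> bool" where
  "alpha_strategy X \<tau> \<longleftrightarrow>
     (\<forall>V U n. partial_legal X V U n \<and> (\<forall>i<n. U i = \<tau> (history V U i)) \<longrightarrow>
        openin X (\<tau> (history V U n)) \<and> \<tau> (history V U n) \<noteq> {} \<and> \<tau> (history V U n) \<subseteq> V n)"

definition compatible :: "('a set list \<Rightarrow> 'a set) \<Rightarrow> (nat \<Rightarrow> 'a set) \<Rightarrow> (nat \<Rightarrow> 'a set) \<Rightarrow> bool" where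
  "compatible \<tau> V U \<longleftrightarrow> (\<forall>n. U n = \<tau> (history V U n))"

definition alpha_wins :: "('a \<Rightarrow> real) set \<Rightarrow> (nat \<Rightarrow> 'a set) \<Rightarrow> bool" where
  "alpha_wins \<Lambda> U \<longleftrightarrow>
     (\<forall>a g. (\<forall>n. a n \<in> U n) \<longrightarrow> g \<in> \<Lambda> \<longrightarrow>
        (\<exists>t \<in> (\<Inter>n. U n). g t \<in> closure (range (\<lambda>n. g (a n)))))"

definition cond_sigma_star_alpha_favorable :: "'a topology \<Rightarrow> ('a \<Rightarrow> real) set \<Rightarrow> bool" where
  "cond_sigma_star_alpha_favorable X \<Lambda> \<longleftrightarrow>
     (\<exists>\<tau>. alpha_strategy X \<tau> \<and>
        (\<forall>V U. legal_play X V U \<and> compatible \<tau> V U \<and> (\<Inter>n. U n) \<noteq> {} \<longrightarrow> alpha_wins \<Lambda> U))"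

end

theory Submission
  imports Defs
begin

definition Wset :: "'a topology \<Rightarrow> (nat \<Rightarrow> nat \<Rightarrow> 'a set) \<Rightarrow> nat \<Rightarrow> 'a set \<Rightarrow> 'a set" where
  "Wset X N n V = V - X closure_of (N (fst (prod_decode n)) (snd (prod_decode n)))"

definition KU :: "(nat \<Rightarrow> ('a \<Rightarrow> real) set) \<Rightarrow> nat \<Rightarrow> ('a \<Rightarrow> real) set" where
  "KU K n = (\<Union>m\<le>n. K m)"

definition ptx where
  "ptx X K N n V = (SOME x. x \<in> Wset X N n V \<and> equicontinuous_at X (KU K n) x)"

definition nbhd where
  "nbhd X K N n V = (SOME Q. openin X Q \<and> ptx X K N n V \<in> Q \<and>
      (\<forall>y\<in>Q. \<forall>g\<in>KU K n. \<bar>g y - g (ptx X K N n V)\<bar> < 1 / real (Suc n)))"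

definition chs where
  "chs X K N n V = (if \<exists>x\<in>Wset X N n V. equicontinuous_at X (KU K n) x
      then Wset X N n V \<inter> nbhd X K N n V else Wset X N n V)"

lemma equi_un:
  assumes "equicontinuous_at X A x" "equicontinuous_at X B x"
  shows "equicontinuous_at X (A \<union> B) x"
  unfolding equicontinuous_at_def
proof (intro allI impI)
  fix e :: real assume e: "e > 0"
  obtain U1 where U1: "openin X U1" "x \<in> U1" "\<forall>y\<in>U1. \<forall>g\<in>A. \<bar>g y - g x\<bar> < e"
    using assms(1) e unfolding equicontinuous_at_def by blast
  obtain U2 where U2: "openin X U2" "x \<in> U2" "\<forall>y\<in>U2. \<forall>g\<in>B. \<bar>g y - g x\<bar> < e"
    using assms(2) e unfolding equicontinuous_at_def by blast
  show "\<exists>U. openin X U \<and> x \<in> U \<and> (\<forall>y\<in>U. \<forall>g\<in>A \<union> B. \<bar>g y - g x\<bar> < e)"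
    by (rule exI[of _ "U1 \<inter> U2"]) (use U1 U2 in auto)
qed

lemma equi_KU:
  assumes "\<And>m. equicontinuous_at X (K m) x"
  shows "equicontinuous_at X (KU K n) x"
proof (induction n)
  case 0 then show ?case using assms by (simp add: KU_def)
next
  case (Suc n)
  have "KU K (Suc n) = KU K n \<union> K (Suc n)"
    unfolding KU_def by (auto simp: le_Suc_eq)
  then show ?case using equi_un[OF Suc assms] by simp
qed

lemma chs_good:
  assumes "openin X V" "V \<noteq> {}" "\<And>i j. nowhere_dense_in X (N i j)"
  shows "openin X (chs X K N n V) \<and> chs X K N n V \<noteq> {} \<and> chs X K N n V \<subseteq> V"
proof -
  let ?N = "N (fst (prod_decode n)) (snd (prod_decode n))"
  have Wo: "openin X (Wset X N n V)" unfolding Wset_def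
    using assms(1) by (intro openin_diff) auto
  have Wne: "Wset X N n V \<noteq> {}"
  proof
    assume "Wset X N n V = {}"
    then have "V \<subseteq> X closure_of ?N" unfolding Wset_def by auto
    then have "V \<subseteq> X interior_of (X closure_of ?N)" using interior_of_maximal assms(1) by blast
    then show False using assms(2,3) unfolding nowhere_dense_in_def by blast
  qed
  have WV: "Wset X N n V \<subseteq> V" unfolding Wset_def by auto
  show ?thesis
  proof (cases "\<exists>x\<in>Wset X N n V. equicontinuous_at X (KU K n) x")
    case True
    then have px: "ptx X K N n V \<in> Wset X N n V \<and> equicontinuous_at X (KU K n) (ptx X K N n V)"
      unfolding ptx_def Bex_def by (rule someI_ex)
    have "\<exists>Q. openin X Q \<and> ptx X K N n V \<in> Q \<and>
      (\<forall>y\<in>Q. \<forall>g\<in>KU K n. \<bar>g y - g (ptx X K N n V)\<bar> < 1 / real (Suc n))"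
      using px unfolding equicontinuous_at_def by simp
    then have nb0: "openin X (nbhd X K N n V) \<and> ptx X K N n V \<in> nbhd X K N n V \<and>
      (\<forall>y\<in>nbhd X K N n V. \<forall>g\<in>KU K n. \<bar>g y - g (ptx X K N n V)\<bar> < 1 / real (Suc n))"
      unfolding nbhd_def by (rule someI_ex)
    then have nb: "openin X (nbhd X K N n V) \<and> ptx X K N n V \<in> nbhd X K N n V" by blast
    show ?thesis using True Wo WV nb px unfolding chs_def by auto
  next
    case False
    then show ?thesis using Wo Wne WV unfolding chs_def by auto
  qed
qed

lemma weak_event:
  assumes an: "\<And>n. a n \<in> topspace X" and t: "t \<in> topspace X"
    and conv: "\<And>g. g \<in> \<Gamma> \<Longrightarrow> ((\<lambda>n. g (a n)) \<longlongrightarrow> g t) sequentially"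
    and S: "openin (weak_topology X \<Gamma>) S"
  shows "t \<in> S \<longrightarrow> eventually (\<lambda>n. a n \<in> S) sequentially"
proof -
  have "generate_topology_on (insert (topspace X) {topspace X \<inter> g -` U | g U. g \<in> \<Gamma> \<and> open U}) S"
    using S unfolding weak_topology_def by (rule openin_topology_generated_by)
  then show ?thesis
  proof induction
    case Empty then show ?case by simp
  next
    case (Int a b) then show ?case using eventually_conj by fastforce
  next
    case (UN K)
    show ?case
    proof
      assume "t \<in> \<Union>K"
      then obtain k where k: "k \<in> K" "t \<in> k" by blast
      then have "eventually (\<lambda>n. a n \<in> k) sequentially" using UN.IH by blast
      then show "eventually (\<lambda>n. a n \<in> \<Union>K) sequentially"
        using k(1) by (auto elim: eventually_mono)
    qed
  next
    case (Basis s)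
    then show ?case
    proof
      assume "s = topspace X" then show ?thesis using an by simp
    next
      assume "s \<in> {topspace X \<inter> g -` U | g U. g \<in> \<Gamma> \<and> open U}"
      then obtain g U where s: "s = topspace X \<inter> g -` U" "g \<in> \<Gamma>" "open U" by blast
      show ?thesis
      proof
        assume "t \<in> s"
        then have "g t \<in> U" using s by auto
        then have "eventually (\<lambda>n. g (a n) \<in> U) sequentially"
          using topological_tendstoD[OF conv[OF s(2)] s(3)] by blast
        then show "eventually (\<lambda>n. a n \<in> s) sequentially"
          using s(1) an by (auto elim: eventually_mono)
      qed
    qed
  qed
qed

lemma weak_conv:
  assumes an: "\<And>n. a n \<in> topspace X" and t: "t \<in> topspace X"
    and conv: "\<And>g. g \<in> \<Gamma> \<Longrightarrow> ((\<lambda>n. g (a n)) \<longlongrightarrow> g t) sequentially"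
    and f: "f \<in> Cfun (weak_topology X \<Gamma>)"
  shows "((\<lambda>n. f (a n)) \<longlongrightarrow> f t) sequentially"
proof (rule topological_tendstoI)
  fix S :: "real set" assume S: "open S" "f t \<in> S"
  let ?T = "weak_topology X \<Gamma>"
  have o: "openin ?T {x \<in> topspace ?T. f x \<in> S}"
    using f S(1) unfolding Cfun_def continuous_map_def by auto
  have "topspace ?T = topspace X" unfolding weak_topology_def by auto
  then have "t \<in> {x \<in> topspace ?T. f x \<in> S}" using t S by auto
  then have "eventually (\<lambda>n. a n \<in> {x \<in> topspace ?T. f x \<in> S}) sequentially"
    using weak_event[OF an t conv o] by blast
  then show "eventually (\<lambda>n. f (a n) \<in> S) sequentially" by (auto elim: eventually_mono)
qed

lemma wins_from_conv:
  assumes "\<And>a g. (\<forall>n. a n \<in> U n) \<Longrightarrow> g \<in> \<Lambda> \<Longrightarrow> \<exists>t\<in>(\<Inter>n. U n). ((\<lambda>n. g (a n)) \<longlongrightarrow> g t) sequentially"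
  shows "alpha_wins \<Lambda> U"
  unfolding alpha_wins_def
proof (intro allI impI)
  fix a g assume "\<forall>n. a n \<in> U n" "g \<in> \<Lambda>"
  then obtain t where "t \<in> (\<Inter>n. U n)" "((\<lambda>n. g (a n)) \<longlongrightarrow> g t) sequentially" using assms by blast
  then show "\<exists>t\<in>\<Inter> (range U). g t \<in> closure (range (\<lambda>n. g (a n)))"
    unfolding closure_sequential by (intro bexI[of _ t] exI[of _ "\<lambda>n. g (a n)"]) auto
qed

lemma history_len: "length (history V U n) = Suc (2 * n)"
  by (induction n) (simp_all add: history_def)

lemma history_last: "last (history V U n) = V n"
  by (simp add: history_def)

theorem proposition2p2:
  fixes X :: "'a topology" and K :: "nat \<Rightarrow> ('a \<Rightarrow> real) set"
  assumes "\<And>n. residual_in X {x \<in> topspace X. equicontinuous_at X (K n) x}"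
  shows "cond_sigma_star_alpha_favorable X (Cfun (weak_topology X (\<Union>n. K n)))
       \<and> cond_sigma_star_alpha_favorable X (\<Union>n. K n)"
proof -
  have "\<forall>n. \<exists>M. (\<forall>k::nat. nowhere_dense_in X (M k)) \<and>
      topspace X - {x \<in> topspace X. equicontinuous_at X (K n) x} \<subseteq> (\<Union>k. M k)"
  proof
    fix n
    have "first_category_in X (topspace X - {x \<in> topspace X. equicontinuous_at X (K n) x})"
      using assms[of n] unfolding residual_in_def by (rule conjunct2)
    then show "\<exists>M. (\<forall>k::nat. nowhere_dense_in X (M k)) \<and>
      topspace X - {x \<in> topspace X. equicontinuous_at X (K n) x} \<subseteq> (\<Union>k. M k)"
      using first_category_in_def by auto
  qed
  then have "\<exists>N. \<forall>n. (\<forall>k::nat. nowhere_dense_in X (N n k)) \<and>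
      topspace X - {x \<in> topspace X. equicontinuous_at X (K n) x} \<subseteq> (\<Union>k. N n k)"
    by (rule choice)
  then obtain N where N0: "\<forall>n. (\<forall>k::nat. nowhere_dense_in X (N n k)) \<and>
      topspace X - {x \<in> topspace X. equicontinuous_at X (K n) x} \<subseteq> (\<Union>k. N n k)"
    by (elim exE)
  have N: "\<And>n k. nowhere_dense_in X (N n k)"
    "\<And>n. topspace X - {x \<in> topspace X. equicontinuous_at X (K n) x} \<subseteq> (\<Union>k. N n k)"
    using N0 by simp_all
  define \<tau> where "\<tau> h = chs X K N ((length h - 1) div 2) (last h)" for h
  have tau_hist: "\<tau> (history V U n) = chs X K N n (V n)" for V U n
    unfolding \<tau>_def history_len history_last by simp
  have strat: "alpha_strategy X \<tau>"
    unfolding alpha_strategy_def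
  proof (intro allI impI)
    fix V U n assume "partial_legal X V U n \<and> (\<forall>i<n. U i = \<tau> (history V U i))"
    then have "openin X (V n)" "V n \<noteq> {}" unfolding partial_legal_def by auto
    then show "openin X (\<tau> (history V U n)) \<and> \<tau> (history V U n) \<noteq> {} \<and> \<tau> (history V U n) \<subseteq> V n"
      unfolding tau_hist by (rule chs_good[OF _ _ N(1)])
  qed
  have conv: "\<exists>t\<in>(\<Inter>n. U n). t \<in> topspace X \<and> (\<forall>g\<in>(\<Union>n. K n). ((\<lambda>n. g (a n)) \<longlongrightarrow> g t) sequentially)"
    if lp: "legal_play X V U" and cp: "compatible \<tau> V U" and ne: "(\<Inter>n. U n) \<noteq> {}"
      and an: "\<forall>n. a n \<in> U n" for V U a
  proof -
    obtain t where t: "t \<in> (\<Inter>n. U n)" using ne by blast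
    have Ueq: "U n = chs X K N n (V n)" for n
    proof -
      have "U n = \<tau> (history V U n)" using cp unfolding compatible_def by (rule spec)
      then show ?thesis unfolding tau_hist .
    qed
    have "openin X (U 0)" using lp unfolding legal_play_def by simp
    then have ttop: "t \<in> topspace X" using t openin_subset by blast
    have tW: "t \<in> Wset X N n (V n)" for n
      using t Ueq[of n] unfolding chs_def by (auto split: if_splits)
    have tN: "t \<notin> N i j" for i j
    proof
      assume tin: "t \<in> N i j"
      have "N i j \<subseteq> topspace X" using N(1) unfolding nowhere_dense_in_def by blast
      then have "t \<in> X closure_of N i j" using tin closure_of_subset by blast
      then show False using tW[of "prod_encode (i, j)"] unfolding Wset_def by simp
    qed
    have teq: "equicontinuous_at X (K m) t" for m
      using N(2)[of m] ttop tN by blast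
    have tKU: "equicontinuous_at X (KU K n) t" for n by (rule equi_KU[OF teq])
    have ex: "\<exists>x\<in>Wset X N n (V n). equicontinuous_at X (KU K n) x" for n
      using tW tKU by blast
    have px: "ptx X K N n (V n) \<in> Wset X N n (V n) \<and> equicontinuous_at X (KU K n) (ptx X K N n (V n))" for n
      using ex[of n] unfolding ptx_def Bex_def by (rule someI_ex)
    have nb: "openin X (nbhd X K N n (V n)) \<and> ptx X K N n (V n) \<in> nbhd X K N n (V n) \<and>
      (\<forall>y\<in>nbhd X K N n (V n). \<forall>g\<in>KU K n. \<bar>g y - g (ptx X K N n (V n))\<bar> < 1 / real (Suc n))" for n
    proof -
      have "\<exists>Q. openin X Q \<and> ptx X K N n (V n) \<in> Q \<and>
        (\<forall>y\<in>Q. \<forall>g\<in>KU K n. \<bar>g y - g (ptx X K N n (V n))\<bar> < 1 / real (Suc n))"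
        using px[of n] unfolding equicontinuous_at_def by simp
      then show ?thesis unfolding nbhd_def by (rule someI_ex)
    qed
    have Un: "U n \<subseteq> nbhd X K N n (V n)" for n
      using Ueq[of n] ex[of n] unfolding chs_def by auto
    have gconv: "((\<lambda>n. g (a n)) \<longlongrightarrow> g t) sequentially" if g: "g \<in> K m" for g m
    proof (rule LIMSEQ_I)
      fix r :: real assume r: "r > 0"
      obtain n0 where n0: "2 / real (Suc n0) < r"
      proof -
        obtain n0 :: nat where "2 / r < real n0" using reals_Archimedean2 by blast
        then have "2 / r < real (Suc n0)" by simp
        then have "2 < real (Suc n0) * r" using r by (simp only: pos_divide_less_eq)
        then have "2 / real (Suc n0) < r" by (simp only: pos_divide_less_eq of_nat_0_less_iff zero_less_Suc mult.commute)
        then show ?thesis using that by blast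
      qed
      show "\<exists>no. \<forall>n\<ge>no. norm (g (a n) - g t) < r"
      proof (intro exI[of _ "max m n0"] allI impI)
        fix n assume n: "max m n0 \<le> n"
        then have gK: "g \<in> KU K n" using g unfolding KU_def by auto
        have "a n \<in> nbhd X K N n (V n)" using an Un by blast
        have "t \<in> nbhd X K N n (V n)" using Un t by blast
        have "\<bar>g (a n) - g (ptx X K N n (V n))\<bar> < 1 / real (Suc n)"
            "\<bar>g t - g (ptx X K N n (V n))\<bar> < 1 / real (Suc n)"
          using nb[of n] gK \<open>a n \<in> nbhd X K N n (V n)\<close> \<open>t \<in> nbhd X K N n (V n)\<close> by blast+
        then have "\<bar>g (a n) - g t\<bar> < 1 / real (Suc n) + 1 / real (Suc n)" by linarith
        also have "1 / real (Suc n) + 1 / real (Suc n) = 2 / real (Suc n)" by (simp add: add_divide_distrib[symmetric])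
        also have "2 / real (Suc n) \<le> 2 / real (Suc n0)"
          using n by (intro divide_left_mono) auto
        finally show "norm (g (a n) - g t) < r" using n0 by simp
      qed
    qed
    have "\<forall>g\<in>(\<Union>n. K n). ((\<lambda>n. g (a n)) \<longlongrightarrow> g t) sequentially"
    proof
      fix g assume "g \<in> (\<Union>n. K n)"
      then obtain m where "g \<in> K m" by blast
      then show "((\<lambda>n. g (a n)) \<longlongrightarrow> g t) sequentially" by (rule gconv)
    qed
    with t ttop show ?thesis by (intro bexI[of _ t]) auto
  qed
  have win: "alpha_wins \<Lambda> U"
    if lp: "legal_play X V U" and cp: "compatible \<tau> V U" and ne: "(\<Inter>n. U n) \<noteq> {}"
      and L: "\<Lambda> = Cfun (weak_topology X (\<Union>n. K n)) \<or> \<Lambda> = (\<Union>n. K n)" for V U \<Lambda>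
  proof (rule wins_from_conv)
    fix a g assume an: "\<forall>n. a n \<in> U n" and g: "g \<in> \<Lambda>"
    obtain t where t: "t \<in> (\<Inter>n. U n)" "t \<in> topspace X"
      and gc: "\<forall>g\<in>(\<Union>n. K n). ((\<lambda>n. g (a n)) \<longlongrightarrow> g t) sequentially"
      using conv[OF lp cp ne an] by blast
    have antop: "a n \<in> topspace X" for n
    proof -
      have "openin X (U n)" using lp unfolding legal_play_def by simp
      then show ?thesis using an openin_subset by blast
    qed
    from L show "\<exists>t\<in>(\<Inter>n. U n). ((\<lambda>n. g (a n)) \<longlongrightarrow> g t) sequentially"
    proof
      assume "\<Lambda> = Cfun (weak_topology X (\<Union>n. K n))"
      then have gC: "g \<in> Cfun (weak_topology X (\<Union>n. K n))" using g by simp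
      have "((\<lambda>n. g (a n)) \<longlongrightarrow> g t) sequentially"
        by (rule weak_conv[OF antop t(2) _ gC]) (use gc in blast)
      then show ?thesis using t(1) by blast
    next
      assume "\<Lambda> = (\<Union>n. K n)"
      then show ?thesis using g gc t(1) by blast
    qed
  qed
  show ?thesis
    unfolding cond_sigma_star_alpha_favorable_def
    using strat win by blast
qed

end
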